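(* Let $P$ and $Q$ be arbitrary distributions on $\mathcal{X}$ with densities, let $\varepsilon>0$, and let $\tau=\max\{\int_{\mathcal{X}}\max\{P(x)-e^{\varepsilon}Q(x),0\}\mathrm{d}x,\ \int_{\mathcal{X}}\max\{Q(x)-e^{\varepsilon}P(x),0\}\mathrm{d}x\}$. Assume $\tau=\int_{\mathcal{X}}\max\{P(x)-e^{\varepsilon}Q(x),0\}\mathrm{d}x$. Then there exists $\varepsilon'\in[0,\varepsilon]$ such that $\tau=\int_{\mathcal{X}}\max\{Q(x)-e^{\varepsilon'}P(x),0\}\mathrm{d}x$. *)

theory Defs
  imports "HOL-Analysis.Analysis"
begin

end

theory Submission
  imports Defs
begin

theorem lemmaB1:
  fixes M :: "'a measure" and P Q :: "'a \<Rightarrow> real" and \<epsilon> \<tau> :: real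
  assumes P_meas: "P \<in> borel_measurable M" and P_nonneg: "\<And>x. x \<in> space M \<Longrightarrow> P x \<ge> 0"
      and P_int: "integrable M P" and P_one: "(\<integral>x. P x \<partial>M) = 1"
      and Q_meas: "Q \<in> borel_measurable M" and Q_nonneg: "\<And>x. x \<in> space M \<Longrightarrow> Q x \<ge> 0"
      and Q_int: "integrable M Q" and Q_one: "(\<integral>x. Q x \<partial>M) = 1"
      and eps_pos: "\<epsilon> > 0"
      and tau_def: "\<tau> = max (\<integral>x. max (P x - exp \<epsilon> * Q x) 0 \<partial>M)
                              (\<integral>x. max (Q x - exp \<epsilon> * P x) 0 \<partial>M)"
      and tau_eq: "\<tau> = (\<integral>x. max (P x - exp \<epsilon> * Q x) 0 \<partial>M)"
  shows "\<exists>\<epsilon>'. 0 \<le> \<epsilon>' \<and> \<epsilon>' \<le> \<epsilon> \<and> \<tau> = (\<integral>x. max (Q x - exp \<epsilon>' * P x) 0 \<partial>M)"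
proof -
  define h where "h a = (\<integral>x. max (Q x - a * P x) 0 \<partial>M)" for a :: real
  have intm: "integrable M (\<lambda>x. max (Q x - a * P x) 0)" for a
    using P_int Q_int by auto
  have lip: "dist (h a) (h b) \<le> 1 * dist a b" for a b
  proof -
    have "h a - h b = (\<integral>x. max (Q x - a * P x) 0 - max (Q x - b * P x) 0 \<partial>M)"
      unfolding h_def using intm by (simp add: Bochner_Integration.integral_diff)
    also have "\<bar>\<dots>\<bar> \<le> (\<integral>x. \<bar>max (Q x - a * P x) 0 - max (Q x - b * P x) 0\<bar> \<partial>M)"
      by (rule integral_abs_bound)
    also have "\<dots> \<le> (\<integral>x. \<bar>a - b\<bar> * P x \<partial>M)"
    proof (rule integral_mono)
      show "integrable M (\<lambda>x. \<bar>max (Q x - a * P x) 0 - max (Q x - b * P x) 0\<bar>)"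
        using intm by auto
      show "integrable M (\<lambda>x. \<bar>a - b\<bar> * P x)" using P_int by auto
      fix x assume "x \<in> space M"
      hence p: "P x \<ge> 0" by (rule P_nonneg)
      have "\<bar>a * P x - b * P x\<bar> = \<bar>a - b\<bar> * P x" using p
        by (simp add: abs_mult left_diff_distrib[symmetric])
      thus "\<bar>max (Q x - a * P x) 0 - max (Q x - b * P x) 0\<bar> \<le> \<bar>a - b\<bar> * P x"
        by (simp add: max_def abs_if split: if_splits) linarith?
    qed
    also have "\<dots> = \<bar>a - b\<bar>" using P_one by simp
    finally show ?thesis by (simp add: dist_real_def)
  qed
  have "1-lipschitz_on UNIV h" by (rule lipschitz_onI) (use lip in auto)
  hence ch: "continuous_on UNIV h" by (rule lipschitz_on_continuous_on)
  have cont: "continuous_on {0..\<epsilon>} (\<lambda>e. h (exp e))"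
    by (rule continuous_on_compose2[OF ch]) (auto intro: continuous_intros)
  have up: "\<tau> \<le> h (exp 0)"
  proof -
    have "\<tau> \<le> (\<integral>x. max (P x - Q x) 0 \<partial>M)"
      unfolding tau_eq
    proof (rule integral_mono)
      show "integrable M (\<lambda>x. max (P x - exp \<epsilon> * Q x) 0)" using P_int Q_int by auto
      show "integrable M (\<lambda>x. max (P x - Q x) 0)" using P_int Q_int by auto
      fix x assume "x \<in> space M"
      hence q: "Q x \<ge> 0" by (rule Q_nonneg)
      have "Q x \<le> exp \<epsilon> * Q x" using q eps_pos
        by (simp add: mult_le_cancel_right1)
      thus "max (P x - exp \<epsilon> * Q x) 0 \<le> max (P x - Q x) 0" by simp
    qed
    also have "(\<integral>x. max (P x - Q x) 0 \<partial>M) = (\<integral>x. max (Q x - P x) 0 \<partial>M)"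
    proof -
      have "(\<integral>x. max (P x - Q x) 0 \<partial>M) - (\<integral>x. max (Q x - P x) 0 \<partial>M)
          = (\<integral>x. max (P x - Q x) 0 - max (Q x - P x) 0 \<partial>M)"
        using P_int Q_int by (simp add: Bochner_Integration.integral_diff)
      also have "\<dots> = (\<integral>x. P x - Q x \<partial>M)"
        by (rule Bochner_Integration.integral_cong) (auto simp: max_def)
      also have "\<dots> = 0" using P_int Q_int P_one Q_one
        by (simp add: Bochner_Integration.integral_diff)
      finally show ?thesis by simp
    qed
    finally show ?thesis by (simp add: h_def)
  qed
  have lo: "h (exp \<epsilon>) \<le> \<tau>" unfolding h_def using tau_def by simp
  obtain e where "0 \<le> e" "e \<le> \<epsilon>" "h (exp e) = \<tau>"
    using IVT2'[of "\<lambda>e. h (exp e)" \<epsilon> \<tau> 0] lo up cont eps_pos by auto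
  thus ?thesis unfolding h_def by auto
qed

end
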